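(* Let $G$ be a graph whose adjacency matrix has exactly two eigenvalues (counted with multiplicity) different from $\pm1$, namely $r>1$ and $s<-1$; all other eigenvalues are equal to $1$ or $-1$. (i) One connected component of $G$ has all vertex degrees at least $2$, and all other connected components are isomorphic to $K_2$. (ii) If $u$ and $v$ are distinct vertices of $G$ with degrees $d_u$ and $d_v$, and every neighbor of $u$ is also a neighbor of $v$, then $d_v-d_u\geq 3$.
   Context: Graphs are finite, simple and undirected; eigenvalues of a graph are those of its adjacency matrix. *)

theory Defs
  imports "Jordan_Normal_Form.Char_Poly"
begin

definition simple_graph :: "nat \<Rightarrow> (nat \<Rightarrow> nat \<Rightarrow> bool) \<Rightarrow> bool" where
  "simple_graph n E \<longleftrightarrow> (\<forall>u v. E u v \<longrightarrow> u < n \<and> v < n) \<and>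
     (\<forall>u v. E u v \<longrightarrow> E v u) \<and> (\<forall>u. \<not> E u u)"

definition adj_matrix :: "nat \<Rightarrow> (nat \<Rightarrow> nat \<Rightarrow> bool) \<Rightarrow> real mat" where
  "adj_matrix n E = mat n n (\<lambda>(i,j). if E i j then 1 else 0)"

definition neighbors :: "nat \<Rightarrow> (nat \<Rightarrow> nat \<Rightarrow> bool) \<Rightarrow> nat \<Rightarrow> nat set" where
  "neighbors n E v = {w. w < n \<and> E v w}"

definition degree :: "nat \<Rightarrow> (nat \<Rightarrow> nat \<Rightarrow> bool) \<Rightarrow> nat \<Rightarrow> nat" where
  "degree n E v = card (neighbors n E v)"

definition reachable :: "(nat \<Rightarrow> nat \<Rightarrow> bool) \<Rightarrow> nat \<Rightarrow> nat \<Rightarrow> bool" where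
  "reachable E u v \<longleftrightarrow> E\<^sup>*\<^sup>* u v"

definition components :: "nat \<Rightarrow> (nat \<Rightarrow> nat \<Rightarrow> bool) \<Rightarrow> nat set set" where
  "components n E = (\<lambda>v. {w. w < n \<and> reachable E v w}) ` {0..<n}"

definition component_is_K2 :: "(nat \<Rightarrow> nat \<Rightarrow> bool) \<Rightarrow> nat set \<Rightarrow> bool" where
  "component_is_K2 E C \<longleftrightarrow> (\<exists>a b. a \<noteq> b \<and> C = {a, b} \<and> E a b)"

end

theory Submission
  imports Defs "Jordan_Normal_Form.Schur_Decomposition"
begin

type_synonym fm = "nat \<Rightarrow> nat \<Rightarrow> real"

context fixes n :: nat begin

definition mm :: "fm \<Rightarrow> fm \<Rightarrow> fm" where
  "mm X Y = (\<lambda>i j. if i < n \<and> j < n then (\<Sum>k<n. X i k * Y k j) else 0)"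

definition idm :: fm where "idm = (\<lambda>i j. if i = j \<and> i < n then 1 else 0)"

definition supp :: "fm \<Rightarrow> bool" where "supp X \<longleftrightarrow> (\<forall>i j. \<not>(i < n \<and> j < n) \<longrightarrow> X i j = 0)"

definition lin :: "fm \<Rightarrow> real \<Rightarrow> fm" where "lin X c = (\<lambda>i j. X i j - c * idm i j)"

fun lp :: "fm \<Rightarrow> real list \<Rightarrow> fm" where
  "lp X [] = idm"
| "lp X (c # cs) = mm (lin X c) (lp X cs)"

definition tr :: "fm \<Rightarrow> real" where "tr X = (\<Sum>i<n. X i i)"

lemma supp_mm[simp]: "supp (mm X Y)" by (simp add: supp_def mm_def)
lemma supp_idm[simp]: "supp idm" by (simp add: supp_def idm_def)
lemma supp_lin[simp]: "supp X \<Longrightarrow> supp (lin X c)" by (simp add: supp_def lin_def idm_def)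
lemma supp_lp[simp]: "supp (lp X cs)" by (cases cs) auto

lemma mm_assoc: "mm (mm X Y) Z = mm X (mm Y Z)"
proof (intro ext)
  fix i j
  show "mm (mm X Y) Z i j = mm X (mm Y Z) i j"
  proof (cases "i < n \<and> j < n")
    case True
    have "(\<Sum>k<n. (\<Sum>l<n. X i l * Y l k) * Z k j) = (\<Sum>k<n. \<Sum>l<n. X i l * Y l k * Z k j)"
      by (simp add: sum_distrib_right)
    also have "\<dots> = (\<Sum>l<n. \<Sum>k<n. X i l * Y l k * Z k j)" by (rule sum.swap)
    also have "\<dots> = (\<Sum>l<n. X i l * (\<Sum>k<n. Y l k * Z k j))"
      by (simp add: sum_distrib_left mult.assoc)
    finally show ?thesis using True by (simp add: mm_def)
  qed (auto simp: mm_def)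
qed

lemma idm_mult_left: "idm i k * x = (if i < n then (if k = i then x else 0) else 0)"
  by (auto simp: idm_def)
lemma idm_mult_right: "x * idm k j = (if j < n then (if k = j then x else 0) else 0)"
  by (auto simp: idm_def)

lemma mm_idm_left: "supp X \<Longrightarrow> mm idm X = X"
  by (auto simp: mm_def idm_mult_left supp_def fun_eq_iff)

lemma mm_idm_right: "supp X \<Longrightarrow> mm X idm = X"
  by (auto simp: mm_def idm_mult_right supp_def fun_eq_iff)

lemma mm_lin_left: "supp Y \<Longrightarrow> mm (lin X c) Y = (\<lambda>i j. mm X Y i j - c * Y i j)"
proof -
  assume Y: "supp Y"
  have "mm (lin X c) Y = (\<lambda>i j. mm X Y i j - c * mm idm Y i j)"
    by (auto simp: mm_def lin_def fun_eq_iff algebra_simps sum_subtractf sum_distrib_left)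
  then show ?thesis using Y by (simp add: mm_idm_left)
qed

lemma mm_lin_right: "supp Y \<Longrightarrow> mm Y (lin X c) = (\<lambda>i j. mm Y X i j - c * Y i j)"
proof -
  assume Y: "supp Y"
  have "mm Y (lin X c) = (\<lambda>i j. mm Y X i j - c * mm Y idm i j)"
    by (auto simp: mm_def lin_def fun_eq_iff algebra_simps sum_subtractf sum_distrib_left)
  then show ?thesis using Y by (simp add: mm_idm_right)
qed

lemma mm_smult_right: "mm X (\<lambda>i j. c * Y i j) = (\<lambda>i j. c * mm X Y i j)"
  by (auto simp: mm_def fun_eq_iff sum_distrib_left algebra_simps)

lemma mm_smult_left: "mm (\<lambda>i j. c * Y i j) X = (\<lambda>i j. c * mm Y X i j)"
  by (auto simp: mm_def fun_eq_iff sum_distrib_left algebra_simps)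

lemma mm_diff_right: "mm X (\<lambda>i j. Y i j - Z i j) = (\<lambda>i j. mm X Y i j - mm X Z i j)"
  by (auto simp: mm_def fun_eq_iff sum_subtractf algebra_simps)

lemma mm_diff_left: "mm (\<lambda>i j. Y i j - Z i j) X = (\<lambda>i j. mm Y X i j - mm Z X i j)"
  by (auto simp: mm_def fun_eq_iff sum_subtractf algebra_simps)

lemma lp_append: "supp X \<Longrightarrow> lp X (xs @ ys) = mm (lp X xs) (lp X ys)"
  by (induction xs) (auto simp: mm_idm_left mm_assoc)

lemma lin_comm: assumes X: "supp X" shows "mm (lin X a) (lin X b) = mm (lin X b) (lin X a)"
proof -
  have e: "\<And>a b. mm (lin X a) (lin X b) = (\<lambda>i j. mm X X i j - (a + b) * X i j + (a * b) * idm i j)"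
    by (simp only: mm_lin_left[OF supp_lin[OF X]] mm_lin_right[OF X]) (simp add: lin_def algebra_simps)
  show ?thesis unfolding e by (simp add: algebra_simps)
qed

lemma lin_lp_comm: "supp X \<Longrightarrow> mm (lin X a) (lp X cs) = mm (lp X cs) (lin X a)"
proof (induction cs)
  case Nil then show ?case by (simp add: mm_idm_left mm_idm_right)
next
  case (Cons c cs)
  have "mm (lin X a) (lp X (c # cs)) = mm (mm (lin X a) (lin X c)) (lp X cs)"
    by (simp add: mm_assoc)
  also have "\<dots> = mm (mm (lin X c) (lin X a)) (lp X cs)"
    using Cons.prems by (simp add: lin_comm)
  also have "\<dots> = mm (lin X c) (mm (lin X a) (lp X cs))"
    by (simp add: mm_assoc)
  also have "\<dots> = mm (lp X (c # cs)) (lin X a)"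
    using Cons by (simp add: mm_assoc)
  finally show ?case .
qed

lemma lp_comm: "supp X \<Longrightarrow> mm (lp X xs) (lp X ys) = mm (lp X ys) (lp X xs)"
proof (induction xs)
  case Nil then show ?case by (simp add: mm_idm_left mm_idm_right)
next
  case (Cons c cs)
  have "mm (lp X (c # cs)) (lp X ys) = mm (lin X c) (mm (lp X ys) (lp X cs))"
    using Cons by (simp add: mm_assoc)
  also have "\<dots> = mm (mm (lin X c) (lp X ys)) (lp X cs)" by (simp add: mm_assoc)
  also have "\<dots> = mm (mm (lp X ys) (lin X c)) (lp X cs)" using Cons.prems by (simp add: lin_lp_comm)
  also have "\<dots> = mm (lp X ys) (lp X (c # cs))" by (simp add: mm_assoc)
  finally show ?case .
qed


lemma mm_zero_right[simp]: "mm X (\<lambda>_ _. 0) = (\<lambda>_ _. 0)" by (simp add: mm_def fun_eq_iff)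
lemma mm_zero_left[simp]: "mm (\<lambda>_ _. 0) X = (\<lambda>_ _. 0)" by (simp add: mm_def fun_eq_iff)

lemma lp_single: "supp X \<Longrightarrow> lp X [c] = lin X c"
  by (simp add: mm_idm_right)

lemma lp_perm: "supp X \<Longrightarrow> mset xs = mset ys \<Longrightarrow> lp X xs = lp X ys"
proof (induction xs arbitrary: ys)
  case Nil then show ?case by simp
next
  case (Cons x xs)
  have "x \<in> set ys" using Cons.prems(2) by (metis list.set_intros(1) set_mset_mset)
  then obtain ys1 ys2 where ys: "ys = ys1 @ x # ys2" by (meson split_list)
  have m: "mset xs = mset (ys1 @ ys2)" using Cons.prems(2) ys by simp
  have "lp X ys = mm (lp X ys1) (mm (lin X x) (lp X ys2))"
    using Cons.prems(1) ys by (simp add: lp_append)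
  also have "\<dots> = mm (mm (lp X ys1) (lin X x)) (lp X ys2)" by (simp add: mm_assoc)
  also have "\<dots> = mm (mm (lin X x) (lp X ys1)) (lp X ys2)"
    using Cons.prems(1) by (simp add: lin_lp_comm)
  also have "\<dots> = mm (lin X x) (lp X (ys1 @ ys2))"
    using Cons.prems(1) by (simp add: mm_assoc lp_append)
  also have "\<dots> = lp X (x # xs)" using Cons.IH[OF Cons.prems(1) m] by simp
  finally show ?case by simp
qed

lemma sim_lin: assumes P: "supp P" and Q: "supp Q" and PQ: "mm P Q = idm"
  and A: "A = mm (mm P B) Q" shows "lin A c = mm (mm P (lin B c)) Q"
proof -
  have "mm (mm P (lin B c)) Q = mm (\<lambda>i j. mm P B i j - c * P i j) Q"
    using P by (simp add: mm_lin_right)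
  also have "\<dots> = (\<lambda>i j. A i j - c * idm i j)"
    by (simp add: mm_diff_left mm_smult_left A PQ)
  finally show ?thesis by (simp add: lin_def)
qed

lemma sim_lp: assumes P: "supp P" and Q: "supp Q" and PQ: "mm P Q = idm" and QP: "mm Q P = idm"
  and A: "A = mm (mm P B) Q" shows "lp A cs = mm (mm P (lp B cs)) Q"
proof (induction cs)
  case Nil
  then show ?case using PQ Q by (simp add: mm_assoc mm_idm_left)
next
  case (Cons c cs)
  have QPZ: "\<And>Z. supp Z \<Longrightarrow> mm Q (mm P Z) = Z"
    by (simp add: mm_assoc[symmetric] QP mm_idm_left)
  have "lp A (c # cs) = mm (mm (mm P (lin B c)) Q) (mm (mm P (lp B cs)) Q)"
    using Cons sim_lin[OF P Q PQ A] by simp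
  also have "\<dots> = mm P (mm (lin B c) (mm Q (mm P (mm (lp B cs) Q))))" by (simp add: mm_assoc)
  also have "\<dots> = mm P (mm (lin B c) (mm (lp B cs) Q))" by (simp add: QPZ)
  also have "\<dots> = mm (mm P (lp B (c # cs))) Q" by (simp add: mm_assoc)
  finally show ?case .
qed

lemma tr_comm: "tr (mm X Y) = tr (mm Y X)"
proof -
  have "tr (mm X Y) = (\<Sum>i<n. \<Sum>k<n. X i k * Y k i)" by (simp add: tr_def mm_def)
  also have "\<dots> = (\<Sum>k<n. \<Sum>i<n. Y k i * X i k)" by (subst sum.swap) (simp add: mult.commute)
  also have "\<dots> = tr (mm Y X)" by (simp add: tr_def mm_def)
  finally show ?thesis .
qed

lemma tr_sim: assumes "supp L" "mm Q P = idm" shows "tr (mm (mm P L) Q) = tr L"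
proof -
  have "tr (mm (mm P L) Q) = tr (mm Q (mm P L))" by (rule tr_comm)
  also have "\<dots> = tr L" using assms by (simp add: mm_assoc[symmetric] mm_idm_left)
  finally show ?thesis .
qed

definition ut :: "fm \<Rightarrow> bool" where "ut X \<longleftrightarrow> (\<forall>i j. j < i \<longrightarrow> X i j = 0)"

lemma ut_mm: assumes "ut X" "ut Y" shows "ut (mm X Y)"
  unfolding ut_def mm_def
proof (intro allI impI)
  fix i j :: nat assume ji: "j < i"
  have "\<forall>k. X i k * Y k j = 0"
  proof
    fix k show "X i k * Y k j = 0"
      using assms ji by (cases "k < i") (auto simp: ut_def)
  qed
  then show "(if i < n \<and> j < n then \<Sum>k<n. X i k * Y k j else 0) = 0" by simp
qed

lemma ut_mm_diag: assumes "ut X" "ut Y" "i < n" shows "mm X Y i i = X i i * Y i i"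
proof -
  have "(\<Sum>k<n. X i k * Y k i) = (\<Sum>k<n. if k = i then X i i * Y i i else 0)"
  proof (rule sum.cong)
    fix k assume "k \<in> {..<n}"
    show "X i k * Y k i = (if k = i then X i i * Y i i else 0)"
      using assms by (cases "k < i"; cases "k = i") (auto simp: ut_def)
  qed simp
  then show ?thesis using assms by (simp add: mm_def)
qed

lemma ut_idm[simp]: "ut idm" by (simp add: ut_def idm_def)
lemma ut_lin: "ut X \<Longrightarrow> ut (lin X c)" by (simp add: ut_def lin_def idm_def)

lemma ut_lp: "ut X \<Longrightarrow> ut (lp X cs) \<and> (\<forall>i<n. lp X cs i i = (\<Prod>c\<leftarrow>cs. X i i - c))"
proof (induction cs)
  case Nil then show ?case by (simp add: idm_def ut_def)
next
  case (Cons c cs)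
  then show ?case using ut_lin[OF Cons.prems] by (simp add: ut_mm ut_mm_diag lin_def idm_def)
qed

lemma tri_CH: assumes B: "supp B" "ut B"
  shows "lp B (map (\<lambda>i. B i i) [0..<n]) = (\<lambda>_ _. 0)"
proof -
  have "\<forall>i j. j < k \<longrightarrow> lp B (map (\<lambda>i. B i i) [0..<k]) i j = 0" if "k \<le> n" for k
    using that
  proof (induction k)
    case 0 then show ?case by simp
  next
    case (Suc k)
    let ?N = "lp B (map (\<lambda>i. B i i) [0..<k])"
    have eq: "lp B (map (\<lambda>i. B i i) [0..<Suc k]) = mm ?N (lin B (B k k))"
      using B by (simp add: lp_append mm_idm_right)
    show ?case
    proof (intro allI impI)
      fix i j assume j: "j < Suc k"
      have z: "?N i l * lin B (B k k) l j = 0" for l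
      proof -
        show "?N i l * lin B (B k k) l j = 0"
        proof (cases "l < k")
          case True then show ?thesis using Suc by simp
        next
          case False
          show ?thesis
          proof (cases "l = j")
            case True
            then have "l = k" using j False by simp
            then show ?thesis using True B(1) by (auto simp: lin_def idm_def supp_def)
          next
            case ne: False
            then have "j < l" using j False by simp
            then show ?thesis using B(2) by (auto simp: lin_def idm_def ut_def)
          qed
        qed
      qed
      show "lp B (map (\<lambda>i. B i i) [0..<Suc k]) i j = 0" unfolding eq mm_def by (simp add: z)
    qed
  qed
  from this[of n] have h: "\<And>i j. j < n \<Longrightarrow> lp B (map (\<lambda>i. B i i) [0..<n]) i j = 0" by simp
  show ?thesis
  proof (intro ext)
    fix i j show "lp B (map (\<lambda>i. B i i) [0..<n]) i j = 0"
      using h[of j] supp_lp[of B "map (\<lambda>i. B i i) [0..<n]"] unfolding supp_def by (cases "j < n") auto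
  qed
qed

definition symm :: "fm \<Rightarrow> bool" where "symm X \<longleftrightarrow> (\<forall>i j. X i j = X j i)"

lemma sym_kill: assumes S: "symm S" and X: "supp X" and h: "mm S (mm S X) = (\<lambda>_ _. 0)"
  shows "mm S X = (\<lambda>_ _. 0)"
proof -
  let ?W = "mm S X"
  have "?W i j = 0" if ij: "i < n" "j < n" for i j
  proof -
    have "(\<Sum>i<n. ?W i j * ?W i j) = (\<Sum>i<n. (\<Sum>k<n. S i k * X k j) * ?W i j)"
      using ij by (simp add: mm_def)
    also have "\<dots> = (\<Sum>i<n. \<Sum>k<n. X k j * (S i k * ?W i j))"
      by (simp add: sum_distrib_left sum_distrib_right mult_ac)
    also have "\<dots> = (\<Sum>k<n. X k j * (\<Sum>i<n. S i k * ?W i j))"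
      by (subst sum.swap) (simp add: sum_distrib_left)
    also have "\<dots> = (\<Sum>k<n. X k j * (\<Sum>i<n. S k i * ?W i j))"
    proof -
      have "\<And>k. (\<Sum>i<n. S i k * ?W i j) = (\<Sum>i<n. S k i * ?W i j)"
        using S unfolding symm_def by metis
      then show ?thesis by simp
    qed
    also have "\<dots> = (\<Sum>k<n. X k j * mm S ?W k j)" using ij by (simp add: mm_def)
    also have "\<dots> = 0" using h by simp
    finally have "(\<Sum>i<n. ?W i j * ?W i j) = 0" .
    then have "\<forall>i\<in>{..<n}. ?W i j * ?W i j = 0"
      by (subst (asm) sum_nonneg_eq_0_iff) auto
    then show ?thesis using ij by simp
  qed
  then show ?thesis by (auto simp: fun_eq_iff mm_def)
qed

lemma symm_lin: "symm X \<Longrightarrow> symm (lin X c)" by (auto simp: symm_def lin_def idm_def)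

lemma kill_rep: assumes A: "symm A" "supp A" and X: "supp X"
  and h: "mm (lp A (replicate m c)) X = (\<lambda>_ _. 0)" shows "mm (lin A c) X = (\<lambda>_ _. 0)"
  using h X
proof (induction m arbitrary: X)
  case 0 then show ?case by (simp add: mm_idm_left)
next
  case (Suc m)
  show ?case
  proof (cases m)
    case 0 then show ?thesis using Suc.prems A by (simp add: mm_idm_right)
  next
    case (Suc m')
    have "mm (lp A (replicate m c)) X = mm (lin A c) (mm (lp A (replicate m' c)) X)"
      using Suc by (simp add: mm_assoc)
    moreover have "mm (lin A c) (mm (lin A c) (mm (lp A (replicate m' c)) X)) = (\<lambda>_ _. 0)"
      using Suc.prems Suc by (simp add: mm_assoc)
    ultimately have "mm (lp A (replicate m c)) X = (\<lambda>_ _. 0)"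
      using sym_kill[OF symm_lin[OF A(1)]] by simp
    then show ?thesis using Suc.IH Suc.prems by blast
  qed
qed


definition tp :: "fm \<Rightarrow> fm" where "tp X = (\<lambda>i j. X j i)"

lemma tp_mm: "tp (mm X Y) = mm (tp Y) (tp X)"
  by (auto simp: tp_def mm_def fun_eq_iff mult.commute)

lemma symm_tp: "symm X \<Longrightarrow> tp X = X" by (auto simp: symm_def tp_def fun_eq_iff)

lemma tp_lp: assumes "symm X" "supp X" shows "tp (lp X cs) = lp X (rev cs)"
proof (induction cs)
  case Nil then show ?case by (auto simp: tp_def idm_def fun_eq_iff)
next
  case (Cons c cs)
  have "tp (lp X (c # cs)) = mm (lp X (rev cs)) (lin X c)"
    using Cons assms by (simp add: tp_mm symm_tp symm_lin)
  also have "\<dots> = lp X (rev (c # cs))" using assms by (simp add: lp_append mm_idm_right)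
  finally show ?case .
qed

lemma symm_lp: assumes "symm X" "supp X" shows "symm (lp X cs)"
proof -
  have "tp (lp X cs) = lp X cs" using tp_lp[OF assms] lp_perm[OF assms(2), of "rev cs" cs] by simp
  then show ?thesis by (auto simp: symm_def tp_def fun_eq_iff)
qed

lemma eig_lp: assumes X: "supp X" and Y: "supp Y" and e: "mm X Y = (\<lambda>i j. r * Y i j)"
  shows "mm (lp X cs) Y = (\<lambda>i j. (\<Prod>c\<leftarrow>cs. r - c) * Y i j)"
proof (induction cs)
  case Nil then show ?case using Y by (simp add: mm_idm_left)
next
  case (Cons c cs)
  have "mm (lp X (c # cs)) Y = mm (lin X c) (\<lambda>i j. (\<Prod>c\<leftarrow>cs. r - c) * Y i j)"
    using Cons by (simp add: mm_assoc)
  also have "\<dots> = (\<lambda>i j. (\<Prod>c\<leftarrow>cs. r - c) * mm (lin X c) Y i j)" by (rule mm_smult_right)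
  also have "\<dots> = (\<lambda>i j. (\<Prod>c\<leftarrow>c # cs. r - c) * Y i j)"
    using Y by (simp add: mm_lin_left e fun_eq_iff algebra_simps)
  finally show ?case .
qed

lemma tr_lp_ut: assumes "ut B" shows "tr (lp B cs) = (\<Sum>i<n. \<Prod>c\<leftarrow>cs. B i i - c)"
  using ut_lp[OF assms, of cs] by (simp add: tr_def)

lemma spectral:
  assumes A: "supp A" "symm A" and B: "supp B" "ut B" and P: "supp P" and Q: "supp Q"
    and PQ: "mm P Q = idm" and QP: "mm Q P = idm" and AB: "A = mm (mm P B) Q"
    and es: "map (\<lambda>i. B i i) [0..<n] = [r, s] @ replicate a 1 @ replicate b (-1)"
    and r: "r > 1" and s: "s < -1"
  shows "\<exists>Pp Qq. supp Pp \<and> supp Qq \<and> symm Pp \<and> symm Qq \<and>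
      mm A Pp = (\<lambda>i j. r * Pp i j) \<and> mm A Qq = (\<lambda>i j. s * Qq i j) \<and>
      mm Pp Pp = Pp \<and> mm Qq Qq = Qq \<and> mm Pp Qq = (\<lambda>_ _. 0) \<and>
      mm A A = (\<lambda>i j. idm i j + (r\<^sup>2 - 1) * Pp i j + (s\<^sup>2 - 1) * Qq i j) \<and> tr Pp = 1"
proof -
  let ?es = "[r, s] @ replicate a 1 @ replicate b (-1)"
  have F0: "lp A ?es = (\<lambda>_ _. 0)"
    using sim_lp[OF P Q PQ QP AB, of ?es] tri_CH[OF B] es by simp
  let ?Lrs = "lp A [r, s]" and ?Ra = "lp A (replicate a 1)" and ?Rb = "lp A (replicate b (-1))"
  have "lp A ?es = mm ?Lrs (lp A (replicate a 1 @ replicate b (-1)))" by (rule lp_append[OF A(1)])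
  also have "\<dots> = mm (lp A (replicate a 1 @ replicate b (-1))) ?Lrs" by (rule lp_comm[OF A(1)])
  also have "\<dots> = mm (mm ?Ra ?Rb) ?Lrs" by (simp only: lp_append[OF A(1)])
  also have "\<dots> = mm ?Ra (mm ?Rb ?Lrs)" by (simp add: mm_assoc)
  finally have "mm ?Ra (mm ?Rb ?Lrs) = (\<lambda>_ _. 0)" using F0 by simp
  then have "mm (lin A 1) (mm ?Rb ?Lrs) = (\<lambda>_ _. 0)" using kill_rep[OF A(2,1)] by simp
  then have "mm ?Rb (mm (lin A 1) ?Lrs) = (\<lambda>_ _. 0)"
    using A by (simp add: mm_assoc[symmetric] lin_lp_comm)
  then have "mm (lin A (-1)) (mm (lin A 1) ?Lrs) = (\<lambda>_ _. 0)" using kill_rep[OF A(2,1)] by simp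
  then have F: "lp A [-1, 1, r, s] = (\<lambda>_ _. 0)" by simp
  have Fp: "lp A xs = (\<lambda>_ _. 0)" if "mset xs = mset [-1, 1, r, s]" for xs
    using lp_perm[OF A(1) that] F by simp
  define Y where "Y = lp A [s, 1, -1]"
  define Z where "Z = lp A [r, 1, -1]"
  have sY: "supp Y" and sZ: "supp Z" by (simp_all add: Y_def Z_def)
  have "mm (lin A r) Y = (\<lambda>_ _. 0)" unfolding Y_def using Fp[of "[r, s, 1, -1]"] by simp
  then have eY: "mm A Y = (\<lambda>i j. r * Y i j)" using sY by (simp add: mm_lin_left fun_eq_iff)
  have "mm (lin A s) Z = (\<lambda>_ _. 0)" unfolding Z_def using Fp[of "[s, r, 1, -1]"] by simp
  then have eZ: "mm A Z = (\<lambda>i j. s * Z i j)" using sZ by (simp add: mm_lin_left fun_eq_iff)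
  define cY where "cY = (r - s) * ((r - 1) * (r + 1))"
  define cZ where "cZ = (s - r) * ((s - 1) * (s + 1))"
  have cY0: "cY > 0" unfolding cY_def using r s by (intro mult_pos_pos) auto
  have cZ0: "cZ \<noteq> 0" unfolding cZ_def using r s by auto
  have YY: "mm Y Y = (\<lambda>i j. cY * Y i j)"
    using eig_lp[OF A(1) sY eY, of "[s, 1, -1]"] by (simp only: Y_def[symmetric]) (simp add: cY_def)
  have ZZ: "mm Z Z = (\<lambda>i j. cZ * Z i j)"
    using eig_lp[OF A(1) sZ eZ, of "[r, 1, -1]"] by (simp only: Z_def[symmetric]) (simp add: cZ_def)
  have YZ: "mm Y Z = (\<lambda>_ _. 0)"
    using eig_lp[OF A(1) sZ eZ, of "[s, 1, -1]"] by (simp only: Y_def[symmetric]) simp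
  define M where "M = lp A [1, -1]"
  have M: "M = (\<lambda>i j. mm A A i j - idm i j)"
    unfolding M_def
    by (simp only: lp.simps mm_idm_right[OF supp_lin[OF A(1)]] mm_lin_left[OF supp_lin[OF A(1)]]
       mm_lin_right[OF A(1)]) (simp add: lin_def fun_eq_iff algebra_simps)
  have YM: "Y = (\<lambda>i j. mm A M i j - s * M i j)" unfolding Y_def M_def using A(1)
    by (subst lp.simps(2)) (rule mm_lin_left[OF supp_lp])
  have ZM: "Z = (\<lambda>i j. mm A M i j - r * M i j)" unfolding Z_def M_def using A(1)
    by (subst lp.simps(2)) (rule mm_lin_left[OF supp_lp])
  define Pp where "Pp = (\<lambda>i j. inverse cY * Y i j)"
  define Qq where "Qq = (\<lambda>i j. inverse cZ * Z i j)"
  have trY: "tr Y = cY"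
  proof -
    have "tr Y = tr (lp B [s, 1, -1])" unfolding Y_def sim_lp[OF P Q PQ QP AB]
      by (rule tr_sim[OF supp_lp QP])
    also have "\<dots> = (\<Sum>i<n. \<Prod>c\<leftarrow>[s, 1, -1]. B i i - c)" by (rule tr_lp_ut[OF B(2)])
    also have "\<dots> = sum_list (map (\<lambda>e. \<Prod>c\<leftarrow>[s, 1, -1]. e - c) (map (\<lambda>i. B i i) [0..<n]))"
      by (simp add: interv_sum_list_conv_sum_set_nat atLeast0LessThan)
    also have "\<dots> = cY" unfolding es cY_def by (simp add: sum_list_replicate)
    finally show ?thesis .
  qed
  show ?thesis
  proof (intro exI conjI)
    show "supp Pp" "supp Qq" using sY sZ by (auto simp: Pp_def Qq_def supp_def)
    have "symm Y" "symm Z" unfolding Y_def Z_def by (rule symm_lp[OF A(2,1)])+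
    then show "symm Pp" "symm Qq" by (auto simp: Pp_def Qq_def symm_def)
    show "mm A Pp = (\<lambda>i j. r * Pp i j)" unfolding Pp_def mm_smult_right eY by (simp add: fun_eq_iff)
    show "mm A Qq = (\<lambda>i j. s * Qq i j)" unfolding Qq_def mm_smult_right eZ by (simp add: fun_eq_iff)
    show "mm Pp Pp = Pp" unfolding Pp_def mm_smult_right mm_smult_left YY using cY0
      by (simp add: fun_eq_iff)
    show "mm Qq Qq = Qq" unfolding Qq_def mm_smult_right mm_smult_left ZZ using cZ0
      by (simp add: fun_eq_iff)
    show "mm Pp Qq = (\<lambda>_ _. 0)" unfolding Pp_def Qq_def mm_smult_right mm_smult_left YZ by simp
    show "tr Pp = 1" using trY cY0 by (simp add: Pp_def tr_def sum_distrib_left[symmetric])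
    show "mm A A = (\<lambda>i j. idm i j + (r\<^sup>2 - 1) * Pp i j + (s\<^sup>2 - 1) * Qq i j)"
    proof (intro ext)
      fix i j
      have rs: "r - s \<noteq> 0" "r - 1 \<noteq> 0" "r + 1 \<noteq> 0" "s - 1 \<noteq> 0" "s + 1 \<noteq> 0" using r s by auto
      have "1 < r * r" using r by (simp add: less_1_mult)
      moreover have "1 < (-s) * (-s)" using s by (intro less_1_mult) auto
      ultimately have r2: "r\<^sup>2 - 1 \<noteq> 0" "s\<^sup>2 - 1 \<noteq> 0" by (auto simp: power2_eq_square)
      have c1: "cY = (r - s) * (r\<^sup>2 - 1)" by (simp add: cY_def power2_eq_square algebra_simps)
      have c2: "cZ = - ((r - s) * (s\<^sup>2 - 1))" by (simp add: cZ_def power2_eq_square algebra_simps)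
      have e1: "(r\<^sup>2 - 1) * inverse cY = inverse (r - s)"
        unfolding c1 using r2 rs by (simp add: inverse_mult_distrib)
      have e2: "(s\<^sup>2 - 1) * inverse cZ = - inverse (r - s)"
        unfolding c2 using r2 rs by (simp add: inverse_mult_distrib)
      have "(r\<^sup>2 - 1) * Pp i j + (s\<^sup>2 - 1) * Qq i j
          = ((r\<^sup>2 - 1) * inverse cY) * Y i j + ((s\<^sup>2 - 1) * inverse cZ) * Z i j"
        by (simp add: Pp_def Qq_def)
      also have "\<dots> = inverse (r - s) * (Y i j - Z i j)" unfolding e1 e2
        by (simp add: algebra_simps)
      also have "Y i j - Z i j = (r - s) * M i j" by (simp add: YM ZM algebra_simps)
      also have "inverse (r - s) * ((r - s) * M i j) = M i j" using rs by simp
      finally show "mm A A i j = idm i j + (r\<^sup>2 - 1) * Pp i j + (s\<^sup>2 - 1) * Qq i j"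
        by (simp add: M)
    qed
  qed
qed

end

definition conv :: "nat \<Rightarrow> real mat \<Rightarrow> fm" where
  "conv n X = (\<lambda>i j. if i < n \<and> j < n then X $$ (i, j) else 0)"

lemma conv_mult: assumes "X \<in> carrier_mat n n" "Y \<in> carrier_mat n n"
  shows "conv n (X * Y) = mm n (conv n X) (conv n Y)"
proof (intro ext)
  fix i j show "conv n (X * Y) i j = mm n (conv n X) (conv n Y) i j"
    using assms by (auto simp: conv_def mm_def scalar_prod_def atLeast0LessThan intro!: sum.cong)
qed

lemma conv_one: "conv n (1\<^sub>m n) = idm n"
  by (auto simp: conv_def idm_def fun_eq_iff)

lemma supp_conv: "supp n (conv n X)" by (simp add: supp_def conv_def)

lemma glue:
  fixes n :: nat and E :: "nat \<Rightarrow> nat \<Rightarrow> bool" and r s :: real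
  assumes G: "simple_graph n E"
    and r: "r > 1" and s: "s < -1"
    and cp: "char_poly (adj_matrix n E) =
                 [:-r, 1:] * [:-s, 1:] * [:-1, 1:] ^ a * [:1, 1:] ^ b"
  defines "A \<equiv> (\<lambda>i j. if E i j then 1 else 0 :: real)"
  shows "\<exists>Pp Qq. supp n Pp \<and> supp n Qq \<and> symm Pp \<and> symm Qq \<and>
      mm n A Pp = (\<lambda>i j. r * Pp i j) \<and> mm n A Qq = (\<lambda>i j. s * Qq i j) \<and>
      mm n Pp Pp = Pp \<and> mm n Qq Qq = Qq \<and> mm n Pp Qq = (\<lambda>_ _. 0) \<and>
      mm n A A = (\<lambda>i j. idm n i j + (r\<^sup>2 - 1) * Pp i j + (s\<^sup>2 - 1) * Qq i j) \<and> tr n Pp = 1"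
proof -
  let ?Am = "adj_matrix n E"
  have Am: "?Am \<in> carrier_mat n n" by (simp add: adj_matrix_def)
  let ?es = "[r, s] @ replicate a 1 @ replicate b (-1::real)"
  have cp2: "char_poly ?Am = (\<Prod>e\<leftarrow>?es. [:-e, 1:])"
  proof -
    have "(\<Prod>e\<leftarrow>?es. [:-e, 1:]) = [:-r, 1:] * ([:-s, 1:] * 1) * ([:- 1, 1:] ^ a * [:- (-1), 1:] ^ b)"
      by (simp only: map_append prod_list.append list.map prod_list.Cons prod_list.Nil
          map_replicate prod_list_replicate mult.assoc)
    then show ?thesis unfolding cp by (simp only: minus_minus mult_1_right mult.assoc)
  qed
  obtain Bm Pm Qm where sd: "schur_decomposition ?Am ?es = (Bm, Pm, Qm)"
    by (cases "schur_decomposition ?Am ?es") auto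
  from schur_decomposition[OF Am cp2 sd]
  have sw: "similar_mat_wit ?Am Bm Pm Qm" and ut: "upper_triangular Bm" and dg: "diag_mat Bm = ?es"
    by auto
  from sw Am have car: "Bm \<in> carrier_mat n n" "Pm \<in> carrier_mat n n" "Qm \<in> carrier_mat n n"
    and PQ: "Pm * Qm = 1\<^sub>m n" and QP: "Qm * Pm = 1\<^sub>m n" and AB: "?Am = Pm * Bm * Qm"
    by (auto simp: similar_mat_wit_def Let_def)
  have Aconv: "A = conv n ?Am"
    using G by (auto simp: A_def conv_def adj_matrix_def simple_graph_def fun_eq_iff)
  have sA: "supp n A" using G by (auto simp: A_def supp_def simple_graph_def)
  have syA: "symm A" using G by (auto simp: A_def symm_def simple_graph_def)
  have AB': "A = mm n (mm n (conv n Pm) (conv n Bm)) (conv n Qm)"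
    unfolding Aconv AB using car by (simp add: conv_mult[symmetric])
  have PQ': "mm n (conv n Pm) (conv n Qm) = idm n"
    using car by (simp add: conv_mult[symmetric] PQ conv_one)
  have QP': "mm n (conv n Qm) (conv n Pm) = idm n"
    using car by (simp add: conv_mult[symmetric] QP conv_one)
  have utB: "ut (conv n Bm)" using ut car by (auto simp: ut_def conv_def upper_triangular_def)
  have es: "map (\<lambda>i. conv n Bm i i) [0..<n] = ?es"
  proof -
    have "map (\<lambda>i. conv n Bm i i) [0..<n] = map (\<lambda>i. Bm $$ (i, i)) [0..<n]"
      by (rule map_cong) (auto simp: conv_def)
    also have "\<dots> = diag_mat Bm" using car unfolding diag_mat_def by simp
    finally show ?thesis using dg by simp
  qed
  show ?thesis
    using spectral[OF sA syA supp_conv utB supp_conv supp_conv PQ' QP' AB' es r s] .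
qed

definition mv :: "nat \<Rightarrow> fm \<Rightarrow> (nat \<Rightarrow> real) \<Rightarrow> nat \<Rightarrow> real" where
  "mv n X y = (\<lambda>i. \<Sum>k<n. X i k * y k)"

definition qf :: "nat \<Rightarrow> fm \<Rightarrow> (nat \<Rightarrow> real) \<Rightarrow> real" where
  "qf n X y = (\<Sum>k<n. \<Sum>l<n. y k * X k l * y l)"

lemma mv_mm: "i < n \<Longrightarrow> mv n (mm n X Y) y i = mv n X (mv n Y y) i"
proof -
  assume i: "i < n"
  have "mv n (mm n X Y) y i = (\<Sum>k<n. \<Sum>l<n. X i l * Y l k * y k)"
    using i by (simp add: mv_def mm_def sum_distrib_right)
  also have "\<dots> = (\<Sum>l<n. \<Sum>k<n. X i l * Y l k * y k)" by (rule sum.swap)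
  also have "\<dots> = mv n X (mv n Y y) i" by (simp add: mv_def sum_distrib_left mult.assoc)
  finally show ?thesis .
qed

lemma symmD: "symm X \<Longrightarrow> X i j = X j i" by (simp add: symm_def)

lemma symm_sum: "symm X \<Longrightarrow> (\<Sum>i<n. X i k * Y i) = (\<Sum>i<n. X k i * Y i)"
  by (rule sum.cong[OF refl]) (simp add: symmD[of X _ k])

lemma sq_mv: assumes "symm X"
  shows "(\<Sum>i<n. (mv n X w i)\<^sup>2) = qf n (mm n X X) w"
proof -
  have "(\<Sum>i<n. (mv n X w i)\<^sup>2) = (\<Sum>i<n. \<Sum>k<n. \<Sum>l<n. w k * (X i k * X i l) * w l)"
    by (simp add: mv_def power2_eq_square sum_product mult_ac)
  also have "\<dots> = (\<Sum>k<n. \<Sum>i<n. \<Sum>l<n. w k * (X i k * X i l) * w l)" by (rule sum.swap)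
  also have "\<dots> = (\<Sum>k<n. \<Sum>l<n. \<Sum>i<n. w k * (X i k * X i l) * w l)"
    by (rule sum.cong[OF refl], rule sum.swap)
  also have "\<dots> = (\<Sum>k<n. \<Sum>l<n. w k * (\<Sum>i<n. X i k * X i l) * w l)"
    by (simp add: sum_distrib_left sum_distrib_right mult_ac)
  also have "\<dots> = (\<Sum>k<n. \<Sum>l<n. w k * (\<Sum>i<n. X k i * X i l) * w l)"
    by (simp add: symm_sum[OF assms])
  also have "\<dots> = qf n (mm n X X) w" by (simp add: qf_def mm_def)
  finally show ?thesis .
qed

lemma qf_lin: "qf n (\<lambda>i j. X i j + a * Y i j + b * Z i j) w = qf n X w + a * qf n Y w + b * qf n Z w"
  by (simp add: qf_def sum.distrib sum_distrib_left algebra_simps)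

lemma qf_idm: "qf n (idm n) w = (\<Sum>k<n. (w k)\<^sup>2)"
  unfolding qf_def
proof (rule sum.cong[OF refl])
  fix k assume k: "k \<in> {..<n}"
  have "(\<Sum>l<n. w k * idm n k l * w l) = (\<Sum>l<n. if l = k then w k * w k else 0)"
    by (rule sum.cong) (auto simp: idm_def)
  also have "\<dots> = (w k)\<^sup>2" using k by (simp add: power2_eq_square)
  finally show "(\<Sum>l<n. w k * idm n k l * w l) = (w k)\<^sup>2" .
qed

lemma idem_form: assumes "symm X" "mm n X X = X" "u < n" "v < n"
  shows "\<alpha>\<^sup>2 * X u u + 2 * \<alpha> * \<beta> * X u v + \<beta>\<^sup>2 * X v v = (\<Sum>k<n. (\<alpha> * X k u + \<beta> * X k v)\<^sup>2)"
proof -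
  have e: "X i j = (\<Sum>k<n. X k i * X k j)" if "i < n" "j < n" for i j
  proof -
    have "X i j = mm n X X i j" using assms(2) by simp
    also have "\<dots> = (\<Sum>k<n. X i k * X k j)" using that by (simp add: mm_def)
    also have "\<dots> = (\<Sum>k<n. X k i * X k j)"
      by (rule sum.cong[OF refl]) (simp add: symmD[OF assms(1), of i])
    finally show ?thesis .
  qed
  have "(\<Sum>k<n. (\<alpha> * X k u + \<beta> * X k v)\<^sup>2) = \<alpha>\<^sup>2 * (\<Sum>k<n. X k u * X k u)
      + 2 * \<alpha> * \<beta> * (\<Sum>k<n. X k u * X k v) + \<beta>\<^sup>2 * (\<Sum>k<n. X k v * X k v)"
    by (simp add: power2_eq_square algebra_simps sum.distrib sum_distrib_left)
  then show ?thesis using e[of u u] e[of u v] e[of v v] assms(3,4) by simp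
qed

definition adj :: "(nat \<Rightarrow> nat \<Rightarrow> bool) \<Rightarrow> fm" where
  "adj E = (\<lambda>i j. if E i j then 1 else 0)"

lemma count_sum: "(\<Sum>k<(n::nat). if p k then 1 else 0 :: real) = real (card {k. k < n \<and> p k})"
proof (induction n)
  case 0 then show ?case by simp
next
  case (Suc n)
  have e: "{k. k < Suc n \<and> p k} = (if p n then insert n {k. k < n \<and> p k} else {k. k < n \<and> p k})"
    by (auto simp: less_Suc_eq)
  show ?case using Suc by (simp add: e)
qed

locale gs =
  fixes n :: nat and E :: "nat \<Rightarrow> nat \<Rightarrow> bool" and r s :: real and P Q :: fm
  assumes G: "simple_graph n E" and r: "r > 1" and s: "s < -1"
    and sP: "supp n P" and sQ: "supp n Q" and syP: "symm P" and syQ: "symm Q"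
    and AP: "mm n (adj E) P = (\<lambda>i j. r * P i j)" and AQ: "mm n (adj E) Q = (\<lambda>i j. s * Q i j)"
    and PP: "mm n P P = P" and QQ: "mm n Q Q = Q" and PQ0: "mm n P Q = (\<lambda>_ _. 0)"
    and AA: "mm n (adj E) (adj E) = (\<lambda>i j. idm n i j + (r\<^sup>2 - 1) * P i j + (s\<^sup>2 - 1) * Q i j)"
    and trP: "tr n P = 1"
begin

abbreviation "A \<equiv> adj E"

lemma E_sym: "E u v \<Longrightarrow> E v u" using G by (simp add: simple_graph_def)
lemma E_irr: "\<not> E u u" using G by (simp add: simple_graph_def)
lemma E_lt: "E u v \<Longrightarrow> u < n \<and> v < n" using G by (simp add: simple_graph_def)

lemma symA: "symm A" by (auto simp: symm_def adj_def intro: E_sym)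

lemma r2: "r\<^sup>2 - 1 > 0"
proof -
  have "1 < r * r" using r by (simp add: less_1_mult)
  then show ?thesis by (simp add: power2_eq_square)
qed

lemma s2: "s\<^sup>2 - 1 > 0"
proof -
  have "1 < (-s) * (-s)" using s by (intro less_1_mult) auto
  then show ?thesis by (simp add: power2_eq_square)
qed

definition cn :: "nat \<Rightarrow> nat \<Rightarrow> nat" where "cn u v = card {k. k < n \<and> E u k \<and> E v k}"

lemma AA_cn: assumes "u < n" "v < n" shows "mm n A A u v = real (cn u v)"
proof -
  have "mm n A A u v = (\<Sum>k<n. if E u k \<and> E v k then 1 else 0)"
    using assms by (auto simp: mm_def adj_def intro!: sum.cong dest: E_sym)
  then show ?thesis by (simp add: count_sum cn_def)
qed

lemma deg_cn: "degree n E u = cn u u"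
  by (simp add: degree_def neighbors_def cn_def)

definition Mf :: "nat \<Rightarrow> nat \<Rightarrow> real" where
  "Mf u v = real (cn u v) - (if u = v then 1 else 0)"

lemma Mf_PQ: assumes "u < n" "v < n" shows "Mf u v = (r\<^sup>2 - 1) * P u v + (s\<^sup>2 - 1) * Q u v"
proof -
  have "mm n A A u v = idm n u v + (r\<^sup>2 - 1) * P u v + (s\<^sup>2 - 1) * Q u v" using AA by simp
  then show ?thesis using assms AA_cn[OF assms] by (simp add: Mf_def idm_def)
qed

lemma form: assumes "u < n" "v < n"
  shows "0 \<le> \<alpha>\<^sup>2 * Mf u u + 2 * \<alpha> * \<beta> * Mf u v + \<beta>\<^sup>2 * Mf v v"
proof -
  have fP: "0 \<le> \<alpha>\<^sup>2 * P u u + 2 * \<alpha> * \<beta> * P u v + \<beta>\<^sup>2 * P v v"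
    unfolding idem_form[OF syP PP assms] by (rule sum_nonneg) simp
  have fQ: "0 \<le> \<alpha>\<^sup>2 * Q u u + 2 * \<alpha> * \<beta> * Q u v + \<beta>\<^sup>2 * Q v v"
    unfolding idem_form[OF syQ QQ assms] by (rule sum_nonneg) simp
  have "\<alpha>\<^sup>2 * Mf u u + 2 * \<alpha> * \<beta> * Mf u v + \<beta>\<^sup>2 * Mf v v
     = (r\<^sup>2 - 1) * (\<alpha>\<^sup>2 * P u u + 2 * \<alpha> * \<beta> * P u v + \<beta>\<^sup>2 * P v v)
     + (s\<^sup>2 - 1) * (\<alpha>\<^sup>2 * Q u u + 2 * \<alpha> * \<beta> * Q u v + \<beta>\<^sup>2 * Q v v)"
    using assms by (simp add: Mf_PQ algebra_simps)
  also have "\<dots> \<ge> 0" using fP fQ r2 s2 by simp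
  finally show ?thesis .
qed

lemma deg_ge1: assumes "v < n" shows "degree n E v \<ge> 1"
proof -
  have "0 \<le> Mf v v" using form[OF assms assms, of 1 0] by simp
  then show ?thesis by (simp add: Mf_def deg_cn)
qed

lemma part2: assumes u: "u < n" and v: "v < n" and uv: "u \<noteq> v"
  and sub: "neighbors n E u \<subseteq> neighbors n E v"
  shows "int (degree n E v) - int (degree n E u) \<ge> 3"
proof -
  have nE: "\<not> E u v"
  proof
    assume "E u v"
    then have "v \<in> neighbors n E u" using v by (simp add: neighbors_def)
    then show False using sub E_irr by (auto simp: neighbors_def)
  qed
  have "{k. k < n \<and> E u k \<and> E v k} = neighbors n E u" using sub by (auto simp: neighbors_def)
  then have cuv: "cn u v = degree n E u" by (simp add: cn_def degree_def)
  have le: "degree n E u \<le> degree n E v"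
    unfolding degree_def by (rule card_mono[OF _ sub]) (simp add: neighbors_def)
  define x where "x = real (degree n E u)"
  define y where "y = real (degree n E v)"
  have Muu: "Mf u u = x - 1" and Mvv: "Mf v v = y - 1" and Muv: "Mf u v = x"
    using uv cuv by (simp_all add: Mf_def x_def y_def deg_cn)
  have x1: "x \<ge> 1" using deg_ge1[OF u] by (simp add: x_def)
  have y0: "y \<ge> 0" by (simp add: y_def)
  have f2: "0 \<le> x\<^sup>2 * (x - 1) + 2 * x * (-(x - 1)) * x + (-(x - 1))\<^sup>2 * (y - 1)"
    using form[OF u v, of x "-(x - 1)"] by (simp add: Muu Mvv Muv)
  have f3: "0 \<le> (-y)\<^sup>2 * (x - 1) + 2 * (-y) * 1 * x + 1\<^sup>2 * (y - 1)"
    using form[OF u v, of "-y" 1] by (simp add: Muu Mvv Muv)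
  show ?thesis
  proof (rule ccontr)
    assume "\<not> ?thesis"
    then have "degree n E v \<le> degree n E u + 2" by simp
    then have yx: "y \<le> x + 2" by (simp add: x_def y_def)
    show False
    proof (cases "x = 1")
      case True
      then show False using f3 y0 by simp
    next
      case False
      then have xp: "x - 1 > 0" using x1 by simp
      have "0 \<le> (x - 1) * ((x - 1) * (y - 1) - x * x)"
        using f2 by (simp add: power2_eq_square algebra_simps)
      then have "0 \<le> (x - 1) * (y - 1) - x * x" using xp by (simp add: zero_le_mult_iff)
      moreover have "(x - 1) * (y - 1) \<le> (x - 1) * (x + 1)"
        using xp yx by (intro mult_left_mono) auto
      moreover have "(x - 1) * (x + 1) = x * x - 1" by (simp add: algebra_simps)
      ultimately show False by linarith
    qed
  qed
qed

end

context gs begin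

definition comp :: "nat \<Rightarrow> nat set" where "comp x = {w. w < n \<and> reachable E x w}"

lemma components_eq: "components n E = comp ` {0..<n}"
  by (simp add: components_def comp_def)

lemma reach_sym: "reachable E x y \<Longrightarrow> reachable E y x"
  unfolding reachable_def
proof (induction rule: rtranclp_induct)
  case base then show ?case by simp
next
  case (step y z)
  then show ?case using E_sym by (meson converse_rtranclp_into_rtranclp)
qed

lemma reach_trans: "reachable E x y \<Longrightarrow> reachable E y z \<Longrightarrow> reachable E x z"
  unfolding reachable_def by simp

lemma comp_self: "x < n \<Longrightarrow> x \<in> comp x" by (simp add: comp_def reachable_def)

lemma comp_eq: assumes "w \<in> comp x" shows "comp w = comp x"
proof -
  have xw: "reachable E x w" and wx: "reachable E w x" using assms reach_sym by (auto simp: comp_def)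
  show ?thesis
  proof
    show "comp w \<subseteq> comp x" using reach_trans[OF xw] by (auto simp: comp_def)
    show "comp x \<subseteq> comp w" using reach_trans[OF wx] by (auto simp: comp_def)
  qed
qed

lemma comp_closed: "i \<in> comp x \<Longrightarrow> E i k \<Longrightarrow> k \<in> comp x"
  using E_lt by (auto simp: comp_def reachable_def intro: rtranclp.rtrancl_into_rtrancl)

lemma comp_closed': "k \<in> comp x \<Longrightarrow> E i k \<Longrightarrow> i \<in> comp x"
  using comp_closed E_sym by blast

lemma comp_lt: "i \<in> comp x \<Longrightarrow> i < n" by (simp add: comp_def)

lemma comp_disj: assumes "comp x \<noteq> comp y" shows "comp x \<inter> comp y = {}"
proof (rule ccontr)
  assume "comp x \<inter> comp y \<noteq> {}"
  then obtain w where "w \<in> comp x" "w \<in> comp y" by blast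
  then have "comp w = comp x" "comp w = comp y" using comp_eq by blast+
  then show False using assms by simp
qed

lemma nbr_deg1: assumes v: "v < n" and d: "degree n E v = 1"
  obtains u where "neighbors n E v = {u}" "neighbors n E u = {v}" "comp v = {v, u}"
    "component_is_K2 E (comp v)"
proof -
  from d obtain u where nv: "neighbors n E v = {u}"
    unfolding degree_def by (auto simp: card_Suc_eq)
  then have Evu: "E v u" and u: "u < n" by (auto simp: neighbors_def)
  have uv: "u \<noteq> v" using Evu E_irr by auto
  have Mvv: "Mf v v = 0" using d by (simp add: Mf_def deg_cn[symmetric])
  have cn0: "cn v w = 0" if w: "w < n" "w \<noteq> v" for w
  proof (rule ccontr)
    assume "cn v w \<noteq> 0"
    then have c1: "real (cn v w) \<ge> 1" by simp
    have Mvw: "Mf v w = real (cn v w)" using w by (simp add: Mf_def)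
    have Mww: "Mf w w \<ge> 0" using form[OF w(1) w(1), of 1 0] by simp
    have "0 \<le> (-(Mf w w + 1))\<^sup>2 * Mf v v + 2 * (-(Mf w w + 1)) * 1 * Mf v w + 1\<^sup>2 * Mf w w"
      by (rule form[OF v w(1)])
    moreover have "(-(Mf w w + 1))\<^sup>2 * Mf v v + 2 * (-(Mf w w + 1)) * 1 * Mf v w + 1\<^sup>2 * Mf w w
       = Mf w w - 2 * ((Mf w w + 1) * real (cn v w))" by (simp add: Mvv Mvw algebra_simps)
    moreover have "Mf w w + 1 \<le> (Mf w w + 1) * real (cn v w)"
      using mult_left_mono[of 1 "real (cn v w)" "Mf w w + 1"] Mww c1 by simp
    ultimately show False using Mww by linarith
  qed
  have nu: "neighbors n E u = {v}"
  proof
    show "{v} \<subseteq> neighbors n E u" using Evu v E_sym by (auto simp: neighbors_def)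
    show "neighbors n E u \<subseteq> {v}"
    proof
      fix w assume "w \<in> neighbors n E u"
      then have Euw: "E u w" and w: "w < n" by (auto simp: neighbors_def)
      show "w \<in> {v}"
      proof (rule ccontr)
        assume "w \<notin> {v}"
        then have "cn v w = 0" using cn0 w by auto
        moreover have "u \<in> {k. k < n \<and> E v k \<and> E w k}" using u Evu Euw E_sym by auto
        ultimately show False by (simp add: cn_def) blast
      qed
    qed
  qed
  have cv: "comp v = {v, u}"
  proof
    show "{v, u} \<subseteq> comp v" using comp_self[OF v] comp_closed[OF comp_self[OF v] Evu] by auto
    show "comp v \<subseteq> {v, u}"
    proof
      fix w assume "w \<in> comp v"
      then have "E\<^sup>*\<^sup>* v w" by (simp add: comp_def reachable_def)
      then show "w \<in> {v, u}"
      proof (induction rule: rtranclp_induct)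
        case base then show ?case by simp
      next
        case (step y z)
        then show ?case using nv nu E_lt by (auto simp: neighbors_def)
      qed
    qed
  qed
  have "component_is_K2 E (comp v)" unfolding component_is_K2_def cv using uv Evu by (intro exI[of _ v] exI[of _ u]) auto
  then show ?thesis using that nv nu cv by blast
qed

lemma dichotomy: assumes x: "x < n"
  shows "(\<forall>w\<in>comp x. degree n E w \<ge> 2) \<or> component_is_K2 E (comp x)"
proof (cases "\<forall>w\<in>comp x. degree n E w \<ge> 2")
  case True then show ?thesis by blast
next
  case False
  then obtain w where w: "w \<in> comp x" and dw: "degree n E w < 2" by auto
  have wn: "w < n" using w comp_lt by blast
  then have "degree n E w = 1" using deg_ge1[OF wn] dw by simp
  from nbr_deg1[OF wn this] have "component_is_K2 E (comp w)" by blast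
  then show ?thesis using comp_eq[OF w] by simp
qed

lemma P_diag: assumes "i < n" shows "P i i = (\<Sum>k<n. (P k i)\<^sup>2)"
proof -
  have "P i i = mm n P P i i" using PP by simp
  then show ?thesis using assms syP by (simp add: mm_def symm_def power2_eq_square)
qed

lemma P_diag_nonneg: "i < n \<Longrightarrow> P i i \<ge> 0" by (simp add: P_diag sum_nonneg)


end

lemma mv_lin: "mv n (\<lambda>i j. X i j + a * Y i j + b * Z i j) y i = mv n X y i + a * mv n Y y i + b * mv n Z y i"
  by (simp add: mv_def sum.distrib sum_distrib_left algebra_simps)

lemma mv_smult: "mv n (\<lambda>i j. a * Y i j) y i = a * mv n Y y i"
  by (simp add: mv_def sum_distrib_left algebra_simps)

lemma mv_idm: "i < n \<Longrightarrow> mv n (idm n) y i = y i"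
proof -
  assume i: "i < n"
  have "mv n (idm n) y i = (\<Sum>k<n. if k = i then y i else 0)"
    unfolding mv_def by (rule sum.cong) (auto simp: idm_def)
  then show ?thesis using i by simp
qed

lemma mv_cong: "(\<And>k. k < n \<Longrightarrow> y k = z k) \<Longrightarrow> mv n X y i = mv n X z i"
  by (simp add: mv_def)

lemma mv_scal: "mv n X (\<lambda>k. c * y k) i = c * mv n X y i"
  by (simp add: mv_def sum_distrib_left algebra_simps)

context gs begin

lemma QA: "mm n Q A = (\<lambda>i j. s * Q i j)"
proof (intro ext)
  fix i j
  show "mm n Q A i j = s * Q i j"
  proof (cases "i < n \<and> j < n")
    case True
    have "mm n Q A i j = (\<Sum>k<n. Q i k * A k j)" using True by (simp add: mm_def)
    also have "\<dots> = (\<Sum>k<n. A j k * Q k i)"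
      by (rule sum.cong[OF refl]) (metis symmD[OF syQ] symmD[OF symA] mult.commute)
    also have "\<dots> = mm n A Q j i" using True by (simp add: mm_def)
    also have "\<dots> = s * Q j i" using AQ by simp
    also have "\<dots> = s * Q i j" by (metis symmD[OF syQ])
    finally show ?thesis .
  next
    case False
    then show ?thesis using sQ by (auto simp: mm_def supp_def)
  qed
qed

lemma P_sq_row: "i < n \<Longrightarrow> (\<Sum>k<n. (P i k)\<^sup>2) = P i i"
proof -
  assume i: "i < n"
  have "(\<Sum>k<n. (P i k)\<^sup>2) = (\<Sum>k<n. (P k i)\<^sup>2)"
    by (rule sum.cong[OF refl]) (metis symmD[OF syP])
  then show ?thesis using P_diag[OF i] by simp
qed

lemma trace_ge1:
  assumes S: "S \<subseteq> {..<n}" and z: "\<And>i. i \<notin> S \<Longrightarrow> y i = 0"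
    and i0: "i0 \<in> S" "y i0 \<noteq> 0" and fx: "\<And>i. i < n \<Longrightarrow> mv n P y i = y i"
  shows "(\<Sum>i\<in>S. P i i) \<ge> 1"
proof -
  define N where "N = (\<Sum>k<n. (y k)\<^sup>2)"
  have i0n: "i0 < n" using S i0 by auto
  have Npos: "N > 0" unfolding N_def
    by (rule sum_pos2[of _ i0]) (use i0n i0 in auto)
  have low: "P i i \<ge> (y i)\<^sup>2 / N" if i: "i < n" for i
  proof -
    define c where "c = y i / N"
    have nn: "0 \<le> (\<Sum>k<n. (P i k - c * y k)\<^sup>2)" by (rule sum_nonneg) simp
    have "(\<Sum>k<n. (P i k - c * y k)\<^sup>2)
        = (\<Sum>k<n. (P i k)\<^sup>2) - 2 * c * (\<Sum>k<n. P i k * y k) + c\<^sup>2 * (\<Sum>k<n. (y k)\<^sup>2)"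
      by (simp add: power2_eq_square algebra_simps sum.distrib sum_subtractf sum_distrib_left)
    also have "\<dots> = P i i - 2 * c * y i + c\<^sup>2 * N"
      using fx[OF i] P_sq_row[OF i] by (simp add: mv_def N_def)
    also have "\<dots> = P i i - (y i)\<^sup>2 / N"
    proof -
      have h1: "c * y i = (y i)\<^sup>2 / N" by (simp add: c_def power2_eq_square)
      have h2: "c\<^sup>2 * N = (y i)\<^sup>2 / N" using Npos by (simp add: c_def power2_eq_square)
      show ?thesis using h1 h2 by (simp add: algebra_simps)
    qed
    finally show ?thesis using nn by simp
  qed
  have "(\<Sum>i\<in>S. (y i)\<^sup>2) = N" unfolding N_def
    by (rule sum.mono_neutral_left) (use S z in auto)
  then have "1 = (\<Sum>i\<in>S. (y i)\<^sup>2 / N)" using Npos by (simp add: sum_divide_distrib[symmetric])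
  also have "\<dots> \<le> (\<Sum>i\<in>S. P i i)" by (rule sum_mono) (use low S in auto)
  finally show ?thesis .
qed

lemma restrict_fix: fixes x :: nat assumes j: "j < n"
  defines "y \<equiv> (\<lambda>i. if i \<in> comp x then P i j else 0)"
  shows "\<And>i. i < n \<Longrightarrow> mv n P y i = y i"
proof -
  have A1: "mv n A y i = r * y i" if i: "i < n" for i
  proof (cases "i \<in> comp x")
    case True
    have "mv n A y i = (\<Sum>k<n. A i k * P k j)"
      unfolding mv_def y_def
      by (rule sum.cong[OF refl]) (auto simp: adj_def intro: comp_closed[OF True])
    also have "\<dots> = mm n A P i j" using i j by (simp add: mm_def)
    also have "\<dots> = r * y i" using AP True by (simp add: y_def)
    finally show ?thesis .
  next
    case False
    have "mv n A y i = (\<Sum>k<n. 0)"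
      unfolding mv_def y_def
      by (rule sum.cong[OF refl]) (use False comp_closed' in \<open>auto simp: adj_def\<close>)
    then show ?thesis using False by (simp add: y_def)
  qed
  have Q1: "mv n Q y i = 0" if i: "i < n" for i
  proof -
    have "mv n (mm n Q A) y i = mv n Q (mv n A y) i" by (rule mv_mm[OF i])
    also have "\<dots> = mv n Q (\<lambda>k. r * y k) i" by (rule mv_cong) (simp add: A1)
    also have "\<dots> = r * mv n Q y i" by (rule mv_scal)
    finally have "s * mv n Q y i = r * mv n Q y i" by (simp add: QA mv_smult)
    then show ?thesis using r s by simp
  qed
  fix i assume i: "i < n"
  have "mv n (mm n A A) y i = mv n A (mv n A y) i" by (rule mv_mm[OF i])
  also have "\<dots> = mv n A (\<lambda>k. r * y k) i" by (rule mv_cong) (simp add: A1)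
  also have "\<dots> = r * mv n A y i" by (rule mv_scal)
  also have "\<dots> = r\<^sup>2 * y i" using A1[OF i] by (simp add: power2_eq_square)
  finally have "y i + (r\<^sup>2 - 1) * mv n P y i + (s\<^sup>2 - 1) * mv n Q y i = r\<^sup>2 * y i"
    by (simp add: AA mv_lin mv_idm[OF i])
  then have "(r\<^sup>2 - 1) * mv n P y i = (r\<^sup>2 - 1) * y i" using Q1[OF i] by (simp add: algebra_simps)
  then show "mv n P y i = y i" using r2 by simp
qed

end

context gs begin

lemma perron: assumes x: "x < n" and deg: "\<forall>w\<in>comp x. degree n E w \<ge> 2"
  shows "\<exists>j\<in>comp x. P j j \<noteq> 0"
proof (rule ccontr)
  assume "\<not> ?thesis"
  then have P0: "\<And>j. j \<in> comp x \<Longrightarrow> P j j = 0" by blast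
  have Pcol: "P k j = 0" if j: "j \<in> comp x" for j k
  proof (cases "k < n")
    case True
    have jn: "j < n" using j comp_lt by blast
    have "(\<Sum>l<n. (P l j)\<^sup>2) = 0" using P_diag[OF jn] P0[OF j] by simp
    then have "\<forall>l\<in>{..<n}. (P l j)\<^sup>2 = 0" by (subst (asm) sum_nonneg_eq_0_iff) auto
    then show ?thesis using True by simp
  next
    case False then show ?thesis using sP by (simp add: supp_def)
  qed
  have xC: "x \<in> comp x" by (rule comp_self[OF x])
  define v where "v = x"
  have vn: "v < n" and vC: "v \<in> comp x" using x xC by (simp_all add: v_def)
  have Mvv: "Mf v v = (s\<^sup>2 - 1) * Q v v" using Mf_PQ[OF vn vn] Pcol[OF vC] by simp
  have "Mf v v \<ge> 1" using deg vC by (simp add: Mf_def deg_cn[symmetric])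
  then have Qvv: "Q v v > 0" using Mvv s2 by (smt (verit) mult_nonneg_nonpos)
  have Qsupp: "Q i v = 0" if i: "i \<notin> comp x" for i
  proof (cases "i < n")
    case True
    have iv: "i \<noteq> v" using i vC by auto
    have "cn i v = 0"
    proof -
      have "{k. k < n \<and> E i k \<and> E v k} = {}"
      proof (rule ccontr)
        assume "{k. k < n \<and> E i k \<and> E v k} \<noteq> {}"
        then obtain k where "E i k" "E v k" by blast
        then have "k \<in> comp x" using comp_closed[OF vC] by blast
        then have "i \<in> comp x" using comp_closed' \<open>E i k\<close> by blast
        then show False using i by simp
      qed
      then show ?thesis by (simp add: cn_def)
    qed
    then have "Mf i v = 0" using iv by (simp add: Mf_def)
    then have "(s\<^sup>2 - 1) * Q i v = 0" using Mf_PQ[OF True vn] Pcol[OF vC] by simp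
    then show ?thesis using s2 by simp
  next
    case False then show ?thesis using sQ by (simp add: supp_def)
  qed
  define w where "w = (\<lambda>k. \<bar>Q k v\<bar>)"
  have wC: "w k = 0" if "k \<notin> comp x" for k using Qsupp[OF that] by (simp add: w_def)
  have eig: "(\<Sum>k<n. A i k * Q k v) = s * Q i v" if i: "i < n" for i
  proof -
    have "mm n A Q i v = s * Q i v" using AQ by simp
    then show ?thesis using i vn by (simp add: mm_def)
  qed
  have Aw: "mv n A w i \<ge> \<bar>s\<bar> * w i" if i: "i < n" for i
  proof -
    have "\<bar>s\<bar> * w i = \<bar>\<Sum>k<n. A i k * Q k v\<bar>" using eig[OF i] by (simp add: w_def abs_mult)
    also have "\<dots> \<le> (\<Sum>k<n. \<bar>A i k * Q k v\<bar>)" by (rule sum_abs)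
    also have "\<dots> = mv n A w i" by (simp add: mv_def w_def abs_mult adj_def)
    finally show ?thesis .
  qed
  have sq1: "s\<^sup>2 * (\<Sum>i<n. (w i)\<^sup>2) \<le> (\<Sum>i<n. (mv n A w i)\<^sup>2)"
  proof -
    have "s\<^sup>2 * (\<Sum>i<n. (w i)\<^sup>2) = (\<Sum>i<n. (\<bar>s\<bar> * w i)\<^sup>2)"
      by (simp add: sum_distrib_left power_mult_distrib)
    also have "\<dots> \<le> (\<Sum>i<n. (mv n A w i)\<^sup>2)"
      by (rule sum_mono, rule power_mono) (use Aw in \<open>auto simp: w_def\<close>)
    finally show ?thesis .
  qed
  have qfP0: "qf n P w = 0" unfolding qf_def
    by (rule sum.neutral, rule ballI, rule sum.neutral) (metis Pcol wC mult_zero_left mult_zero_right)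
  have sq2: "(\<Sum>i<n. (mv n A w i)\<^sup>2) = (\<Sum>i<n. (w i)\<^sup>2) + (s\<^sup>2 - 1) * qf n Q w"
    using sq_mv[OF symA, of n w] by (simp add: AA qf_lin qf_idm qfP0)
  have qQ: "qf n Q w \<ge> (\<Sum>i<n. (w i)\<^sup>2)"
  proof -
    have "(s\<^sup>2 - 1) * (\<Sum>i<n. (w i)\<^sup>2) \<le> (s\<^sup>2 - 1) * qf n Q w"
      using sq1 sq2 by (simp add: algebra_simps)
    then show ?thesis using s2 by simp
  qed
  define u where "u = mv n Q w"
  have uu: "(\<Sum>i<n. (u i)\<^sup>2) = qf n Q w" using sq_mv[OF syQ, of n w] QQ by (simp add: u_def)
  have wu: "(\<Sum>i<n. w i * u i) = qf n Q w"
    by (simp add: u_def mv_def qf_def sum_distrib_left mult_ac)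
  have "(\<Sum>i<n. (w i - u i)\<^sup>2) = (\<Sum>i<n. (w i)\<^sup>2) - 2 * (\<Sum>i<n. w i * u i) + (\<Sum>i<n. (u i)\<^sup>2)"
    by (simp add: power2_eq_square algebra_simps sum.distrib sum_subtractf sum_distrib_left)
  also have "\<dots> \<le> 0" using qQ wu uu by simp
  finally have "(\<Sum>i<n. (w i - u i)\<^sup>2) \<le> 0" .
  then have "(\<Sum>i<n. (w i - u i)\<^sup>2) = 0" by (simp add: antisym sum_nonneg)
  then have "\<forall>i\<in>{..<n}. (w i - u i)\<^sup>2 = 0" by (subst (asm) sum_nonneg_eq_0_iff) auto
  then have wueq: "\<And>i. i < n \<Longrightarrow> w i = u i" by simp
  have "mv n A w v = mv n A u v" by (rule mv_cong) (simp add: wueq)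
  also have "\<dots> = mv n (mm n A Q) w v" unfolding u_def by (rule mv_mm[OF vn, symmetric])
  also have "\<dots> = s * u v" by (simp add: AQ mv_smult u_def)
  also have "\<dots> = s * w v" using wueq[OF vn] by simp
  finally have e: "mv n A w v = s * w v" .
  have "mv n A w v \<ge> 0" unfolding mv_def by (rule sum_nonneg) (simp add: adj_def w_def)
  moreover have "s * w v < 0" using s Qvv by (simp add: w_def mult_neg_pos)
  ultimately show False using e by simp
qed

lemma exists_good: "\<exists>x<n. \<forall>w\<in>comp x. degree n E w \<ge> 2"
proof (rule ccontr)
  assume none: "\<not> ?thesis"
  have pair: "\<exists>u. neighbors n E i = {u} \<and> neighbors n E u = {i}" if i: "i < n" for i
  proof -
    from none i obtain w where w: "w \<in> comp i" and dw: "degree n E w < 2" by force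
    have wn: "w < n" using w comp_lt by blast
    then have "degree n E w = 1" using deg_ge1[OF wn] dw by simp
    obtain u' where
      a: "neighbors n E w = {u'}" "neighbors n E u' = {w}" "comp w = {w, u'}"
         "component_is_K2 E (comp w)" by (rule nbr_deg1[OF wn \<open>degree n E w = 1\<close>])
    have "i \<in> comp w" using comp_eq[OF w] comp_self[OF i] by simp
    then have "i = w \<or> i = u'" using a(3) by simp
    then show ?thesis using a by blast
  qed
  have Mf0: "Mf i j = 0" if i: "i < n" and j: "j < n" for i j
  proof -
    obtain u where nu: "neighbors n E i = {u}" "neighbors n E u = {i}" using pair[OF i] by blast
    have "{k. k < n \<and> E i k \<and> E j k} = (if j = i then {u} else {})"
    proof (cases "j = i")
      case True
      then show ?thesis using nu(1) by (simp add: neighbors_def)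
    next
      case False
      have "k \<notin> {k. k < n \<and> E i k \<and> E j k}" for k
      proof
        assume k: "k \<in> {k. k < n \<and> E i k \<and> E j k}"
        then have "k \<in> neighbors n E i" by (simp add: neighbors_def)
        then have "k = u" using nu(1) by simp
        then have "E u j" using k E_sym by simp
        then have "j \<in> neighbors n E u" using j by (simp add: neighbors_def)
        then show False using nu(2) False by simp
      qed
      then have "{k. k < n \<and> E i k \<and> E j k} = {}" by blast
      then show ?thesis using False by simp
    qed
    then show ?thesis by (simp add: Mf_def cn_def)
  qed
  have Pz: "P i j = 0" if i: "i < n" and j: "j < n" for i j
  proof -
    have rel: "(r\<^sup>2 - 1) * P k j = - ((s\<^sup>2 - 1) * Q k j)" if k: "k < n" for k
      using Mf_PQ[OF k j] Mf0[OF k j] by simp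
    have "(r\<^sup>2 - 1) * P i j = (r\<^sup>2 - 1) * mm n P P i j" using PP by simp
    also have "\<dots> = (\<Sum>k<n. P i k * ((r\<^sup>2 - 1) * P k j))"
      using i j by (simp add: mm_def sum_distrib_left mult_ac)
    also have "\<dots> = (\<Sum>k<n. P i k * (- ((s\<^sup>2 - 1) * Q k j)))"
      by (rule sum.cong[OF refl]) (simp add: rel)
    also have "\<dots> = - ((s\<^sup>2 - 1) * (\<Sum>k<n. P i k * Q k j))"
      by (simp add: sum_distrib_left sum_negf[symmetric] algebra_simps)
    also have "(\<Sum>k<n. P i k * Q k j) = mm n P Q i j" using i j by (simp add: mm_def)
    also have "\<dots> = 0" using PQ0 by simp
    finally show ?thesis using r2 by simp
  qed
  have "tr n P = 0" unfolding tr_def by (rule sum.neutral) (simp add: Pz)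
  then show False using trP by simp
qed

theorem main:
  shows "(\<exists>C\<in>components n E. (\<forall>v\<in>C. degree n E v \<ge> 2) \<and>
            (\<forall>C'\<in>components n E. C' \<noteq> C \<longrightarrow> component_is_K2 E C'))
       \<and> (\<forall>u v. u < n \<longrightarrow> v < n \<longrightarrow> u \<noteq> v \<longrightarrow>
            neighbors n E u \<subseteq> neighbors n E v \<longrightarrow>
            int (degree n E v) - int (degree n E u) \<ge> 3)"
proof
  show "\<forall>u v. u < n \<longrightarrow> v < n \<longrightarrow> u \<noteq> v \<longrightarrow>
            neighbors n E u \<subseteq> neighbors n E v \<longrightarrow>
            int (degree n E v) - int (degree n E u) \<ge> 3"
    using part2 by blast
  obtain x where x: "x < n" and gx: "\<forall>w\<in>comp x. degree n E w \<ge> 2" using exists_good by blast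
  have mass: "(\<Sum>i\<in>comp y. P i i) \<ge> 1" if y: "y < n" and gy: "\<forall>w\<in>comp y. degree n E w \<ge> 2" for y
  proof -
    obtain j where jC: "j \<in> comp y" and Pj: "P j j \<noteq> 0" using perron[OF y gy] by blast
    have jn: "j < n" using jC comp_lt by blast
    let ?y = "\<lambda>i. if i \<in> comp y then P i j else 0"
    show ?thesis
      by (rule trace_ge1[of _ ?y j]) (use comp_lt jC Pj restrict_fix[OF jn, of _ y] in auto)
  qed
  show "\<exists>C\<in>components n E. (\<forall>v\<in>C. degree n E v \<ge> 2) \<and>
            (\<forall>C'\<in>components n E. C' \<noteq> C \<longrightarrow> component_is_K2 E C')"
  proof (intro bexI conjI ballI impI)
    show "comp x \<in> components n E" using x by (simp add: components_eq)
    show "\<And>v. v \<in> comp x \<Longrightarrow> degree n E v \<ge> 2" using gx by blast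
    fix C' assume C': "C' \<in> components n E" and ne: "C' \<noteq> comp x"
    then have "C' \<in> comp ` {0..<n}" by (simp add: components_eq)
    then obtain y where y0: "y \<in> {0..<n}" and Cy: "C' = comp y" by blast
    have y: "y < n" using y0 by simp
    show "component_is_K2 E C'"
    proof (cases "\<forall>w\<in>comp y. degree n E w \<ge> 2")
      case False then show ?thesis using dichotomy[OF y] Cy by blast
    next
      case True
      have m1: "(\<Sum>i\<in>comp x. P i i) \<ge> 1" by (rule mass[OF x gx])
      have m2: "(\<Sum>i\<in>comp y. P i i) \<ge> 1" by (rule mass[OF y True])
      have dj: "comp x \<inter> comp y = {}" using comp_disj ne Cy by blast
      have fin: "finite (comp x)" "finite (comp y)" using comp_lt by (auto intro: finite_subset[of _ "{..<n}"])
      have un: "(\<Sum>i\<in>comp x \<union> comp y. P i i) = (\<Sum>i\<in>comp x. P i i) + (\<Sum>i\<in>comp y. P i i)"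
        by (rule sum.union_disjoint[OF fin dj])
      have le: "(\<Sum>i\<in>comp x \<union> comp y. P i i) \<le> (\<Sum>i<n. P i i)"
        by (rule sum_mono2) (use comp_lt P_diag_nonneg in auto)
      have "tr n P \<ge> 2" using un le m1 m2 by (simp add: tr_def)
      then show ?thesis using trP by simp
    qed
  qed
qed

end

theorem lemma2p3:
  fixes n :: nat and E :: "nat \<Rightarrow> nat \<Rightarrow> bool" and r s :: real
  assumes G: "simple_graph n E"
    and r: "r > 1" and s: "s < -1"
    and spec: "\<exists>a b. char_poly (adj_matrix n E) =
                 [:-r, 1:] * [:-s, 1:] * [:-1, 1:] ^ a * [:1, 1:] ^ b"
  shows "(\<exists>C\<in>components n E. (\<forall>v\<in>C. degree n E v \<ge> 2) \<and>
            (\<forall>C'\<in>components n E. C' \<noteq> C \<longrightarrow> component_is_K2 E C'))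
       \<and> (\<forall>u v. u < n \<longrightarrow> v < n \<longrightarrow> u \<noteq> v \<longrightarrow>
            neighbors n E u \<subseteq> neighbors n E v \<longrightarrow>
            int (degree n E v) - int (degree n E u) \<ge> 3)"
proof -
  from spec obtain a b where cp: "char_poly (adj_matrix n E) =
                 [:-r, 1:] * [:-s, 1:] * [:-1, 1:] ^ a * [:1, 1:] ^ b" by blast
  have AE: "(\<lambda>i j. if E i j then 1 else 0 :: real) = adj E" by (simp add: adj_def fun_eq_iff)
  obtain Pp Qq where h1: "supp n Pp" and h2: "supp n Qq" and h3: "symm Pp" and h4: "symm Qq"
    and h5: "mm n (adj E) Pp = (\<lambda>i j. r * Pp i j)" and h6: "mm n (adj E) Qq = (\<lambda>i j. s * Qq i j)"
    and h7: "mm n Pp Pp = Pp" and h8: "mm n Qq Qq = Qq" and h9: "mm n Pp Qq = (\<lambda>_ _. 0)"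
    and h10: "mm n (adj E) (adj E) = (\<lambda>i j. idm n i j + (r\<^sup>2 - 1) * Pp i j + (s\<^sup>2 - 1) * Qq i j)"
    and h11: "tr n Pp = 1"
    using glue[OF G r s cp] unfolding AE by blast
  interpret gs n E r s Pp Qq
    by (rule gs.intro) (fact G r s h1 h2 h3 h4 h5 h6 h7 h8 h9 h10 h11)+
  show ?thesis by (rule main)
qed

end
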